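(* Let $w$ be a metric on $V$, $T$ a minimum spanning tree of $G_w$, and $T'$ a subtree of $T$. Let $e=(u,v)$ be a pair with $u\in V(T')$ and $v\notin V(T')$. Then $\mathsf{adv}(\{e\},T')\le \mathsf{adv}^*(T')$.
   Context: $w$ is a metric on a finite set $V$, $G_w$ the complete graph on $V$ with edge weights $w$, and $w(E')=\sum_{e\in E'}w(e)$ for a set of pairs $E'$. For a pair $e=(u,v)$, $P^T_e$ is the $u$–$v$ path in $T$; an edge $f\in E(T)$ is covered by $e$ iff $f\in E(P^T_e)$; $\mathsf{cov}(E')$ is the set of edges of $T$ covered by some pair of $E'$, and for a subtree $T'$, $\mathsf{cov}(E',T')=\mathsf{cov}(E')\cap E(T')$ and $\mathsf{adv}(E',T')=w(\mathsf{cov}(E',T'))-w(E')$. A vertex $x$ of $T'$ is a special vertex of $T'$ iff $\deg_{T'}(x)\neq 2$. The optimal special cover advantage $\mathsf{adv}^*(T')$ is the maximum of $\mathsf{adv}(E',T')$ over all sets $E'$ of pairs each having at least one endpoint that is a special vertex of $T'$ (the empty set is allowed, so $\mathsf{adv}^*(T')\ge 0$). *)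

theory Defs
  imports Complex_Main
begin

text \<open>Vertices have type 'a; edges / pairs are unordered doubletons {x,y} with x \<noteq> y.\<close>

definition metric_on :: "'a set \<Rightarrow> ('a \<Rightarrow> 'a \<Rightarrow> real) \<Rightarrow> bool" where
  "metric_on V w \<longleftrightarrow>
     (\<forall>x\<in>V. w x x = 0) \<and>
     (\<forall>x\<in>V. \<forall>y\<in>V. x \<noteq> y \<longrightarrow> w x y > 0) \<and>
     (\<forall>x\<in>V. \<forall>y\<in>V. w x y = w y x) \<and>
     (\<forall>x\<in>V. \<forall>y\<in>V. \<forall>z\<in>V. w x z \<le> w x y + w y z)"

text \<open>All pairs of distinct elements of V: the edge set of the complete graph G_w.\<close>
definition all_pairs :: "'a set \<Rightarrow> 'a set set" where
  "all_pairs V = {{x, y} | x y. x \<in> V \<and> y \<in> V \<and> x \<noteq> y}"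

definition pw :: "('a \<Rightarrow> 'a \<Rightarrow> real) \<Rightarrow> 'a set \<Rightarrow> real" where
  "pw w e = (THE d. \<exists>x y. e = {x, y} \<and> x \<noteq> y \<and> d = w x y)"

definition wset :: "('a \<Rightarrow> 'a \<Rightarrow> real) \<Rightarrow> 'a set set \<Rightarrow> real" where
  "wset w F = (\<Sum>e\<in>F. pw w e)"

definition walk :: "'a set set \<Rightarrow> 'a list \<Rightarrow> bool" where
  "walk E xs \<longleftrightarrow> xs \<noteq> [] \<and> (\<forall>i. Suc i < length xs \<longrightarrow> {xs ! i, xs ! Suc i} \<in> E)"

definition simple_path :: "'a set set \<Rightarrow> 'a list \<Rightarrow> 'a \<Rightarrow> 'a \<Rightarrow> bool" where
  "simple_path E xs u v \<longleftrightarrow> walk E xs \<and> distinct xs \<and> hd xs = u \<and> last xs = v"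

definition path_edges :: "'a list \<Rightarrow> 'a set set" where
  "path_edges xs = {{xs ! i, xs ! Suc i} | i. Suc i < length xs}"

definition has_cycle :: "'a set set \<Rightarrow> bool" where
  "has_cycle E \<longleftrightarrow> (\<exists>xs. walk E xs \<and> distinct xs \<and> length xs \<ge> 3 \<and> {last xs, hd xs} \<in> E)"

definition is_tree :: "'a set \<Rightarrow> 'a set set \<Rightarrow> bool" where
  "is_tree V E \<longleftrightarrow> finite V \<and> V \<noteq> {} \<and> E \<subseteq> all_pairs V \<and>
     (\<forall>x\<in>V. \<forall>y\<in>V. \<exists>xs. simple_path E xs x y) \<and> \<not> has_cycle E"

definition spanning_tree :: "'a set \<Rightarrow> 'a set set \<Rightarrow> bool" where
  "spanning_tree V T \<longleftrightarrow> is_tree V T"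

definition min_spanning_tree :: "'a set \<Rightarrow> ('a \<Rightarrow> 'a \<Rightarrow> real) \<Rightarrow> 'a set set \<Rightarrow> bool" where
  "min_spanning_tree V w T \<longleftrightarrow> spanning_tree V T \<and>
     (\<forall>T2. spanning_tree V T2 \<longrightarrow> wset w T \<le> wset w T2)"

definition subtree :: "'a set \<Rightarrow> 'a set set \<Rightarrow> 'a set \<Rightarrow> 'a set set \<Rightarrow> bool" where
  "subtree V T V' E' \<longleftrightarrow> V' \<subseteq> V \<and> E' \<subseteq> T \<and> is_tree V' E'"

definition tree_path_edges :: "'a set set \<Rightarrow> 'a \<Rightarrow> 'a \<Rightarrow> 'a set set" where
  "tree_path_edges T u v = \<Union>{path_edges xs | xs. simple_path T xs u v}"

definition cov :: "'a set set \<Rightarrow> 'a set set \<Rightarrow> 'a set set" where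
  "cov T F = {f \<in> T. \<exists>u v. {u, v} \<in> F \<and> f \<in> tree_path_edges T u v}"

definition adv :: "'a set set \<Rightarrow> ('a \<Rightarrow> 'a \<Rightarrow> real) \<Rightarrow> 'a set set \<Rightarrow> 'a set set \<Rightarrow> real" where
  "adv T w F E' = wset w (cov T F \<inter> E') - wset w F"

definition degree :: "'a set set \<Rightarrow> 'a \<Rightarrow> nat" where
  "degree E x = card {f \<in> E. x \<in> f}"

definition special :: "'a set \<Rightarrow> 'a set set \<Rightarrow> 'a \<Rightarrow> bool" where
  "special V' E' x \<longleftrightarrow> x \<in> V' \<and> degree E' x \<noteq> 2"

definition adv_star :: "'a set \<Rightarrow> 'a set set \<Rightarrow> ('a \<Rightarrow> 'a \<Rightarrow> real) \<Rightarrow> 'a set \<Rightarrow> 'a set set \<Rightarrow> real" where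
  "adv_star V T w V' E' = Max {adv T w F E' | F. F \<subseteq> all_pairs V \<and>
      (\<forall>e\<in>F. \<exists>x\<in>e. special V' E' x)}"

end

theory Submission
  imports Defs
begin

lemma walk_single[simp]: "walk E [x]" by (simp add: walk_def)
lemma walk_Nil[simp]: "\<not> walk E []" by (simp add: walk_def)
lemma walk_CC[simp]: "walk E (x # y # zs) \<longleftrightarrow> {x,y} \<in> E \<and> walk E (y # zs)"
  unfolding walk_def
  apply (auto simp: nth_Cons split: nat.splits)
  done

lemma pe_Nil[simp]: "path_edges [] = {}" by (simp add: path_edges_def)
lemma pe_single[simp]: "path_edges [x] = {}" by (simp add: path_edges_def)
lemma pe_CC[simp]: "path_edges (x # y # zs) = insert {x,y} (path_edges (y # zs))"
proof (rule set_eqI, rule iffI)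
  fix f assume "f \<in> path_edges (x#y#zs)"
  then obtain i where f: "f = {(x#y#zs)!i, (x#y#zs)!Suc i}" "Suc i < length (x#y#zs)"
    unfolding path_edges_def by blast
  show "f \<in> insert {x,y} (path_edges (y # zs))"
  proof (cases i)
    case 0 then show ?thesis using f by simp
  next
    case (Suc j) then show ?thesis using f unfolding path_edges_def by auto
  qed
next
  fix f assume "f \<in> insert {x,y} (path_edges (y # zs))"
  then show "f \<in> path_edges (x#y#zs)"
  proof
    assume "f = {x,y}" then show ?thesis unfolding path_edges_def by force
  next
    assume "f \<in> path_edges (y # zs)"
    then obtain j where f: "f = {(y#zs)!j, (y#zs)!Suc j}" "Suc j < length (y#zs)"
      unfolding path_edges_def by blast
    then have "f = {(x#y#zs)!Suc j, (x#y#zs)!Suc (Suc j)}" "Suc (Suc j) < length (x#y#zs)" by auto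
    then show ?thesis unfolding path_edges_def by blast
  qed
qed


lemma pe_sub: "f \<in> path_edges xs \<Longrightarrow> f \<subseteq> set xs"
  unfolding path_edges_def by auto

lemma finite_pe: "finite (path_edges xs)"
  by (induction xs rule: induct_list012) auto

lemma walk_app: "walk E (xs @ [y]) \<Longrightarrow> walk E (y # ys) \<Longrightarrow> walk E (xs @ y # ys)"
proof (induction xs)
  case Nil then show ?case by simp
next
  case (Cons x xs) then show ?case by (cases xs) auto
qed

lemma pe_app1: "path_edges (xs @ [y]) \<subseteq> path_edges (xs @ y # ys)"
proof (induction xs)
  case Nil then show ?case by simp
next
  case (Cons x xs) then show ?case by (cases xs) auto
qed

lemma pe_app2: "path_edges (y # ys) \<subseteq> path_edges (xs @ y # ys)"
proof (induction xs)
  case Nil then show ?case by simp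
next
  case (Cons x xs) then show ?case by (cases xs) auto
qed

lemma walk_mono: "E \<subseteq> F \<Longrightarrow> walk E xs \<Longrightarrow> walk F xs"
  unfolding walk_def by auto

lemma walk_take: "walk E xs \<Longrightarrow> 0 < n \<Longrightarrow> walk E (take n xs)"
  unfolding walk_def by auto

lemma cycle_lemma:
  assumes "walk E xs" "distinct xs" "2 \<le> j" "j < length xs" "{xs!j, hd xs} \<in> E"
  shows "has_cycle E"
proof -
  let ?L = "take (Suc j) xs"
  have "walk E ?L" using assms walk_take by blast
  moreover have "distinct ?L" using assms by simp
  moreover have "length ?L \<ge> 3" using assms by simp
  moreover have "last ?L = xs!j" using assms by (subst last_conv_nth) auto
  moreover have "hd ?L = hd xs" using assms by (cases xs) auto
  ultimately show ?thesis unfolding has_cycle_def using assms(5) by metis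
qed

lemma all_pairs_D: "{x,y} \<in> all_pairs W \<Longrightarrow> x \<in> W \<and> y \<in> W \<and> x \<noteq> y"
  unfolding all_pairs_def by (auto simp: doubleton_eq_iff)

lemma walk_set: "walk E xs \<Longrightarrow> E \<subseteq> all_pairs W \<Longrightarrow> last xs \<in> W \<Longrightarrow> set xs \<subseteq> W"
proof (induction xs)
  case Nil then show ?case by simp
next
  case (Cons x xs) then show ?case
    by (cases xs) (auto dest!: all_pairs_D)
qed

lemma walk_rev: "walk E xs \<Longrightarrow> walk E (rev xs)"
  unfolding walk_def
proof safe
  fix i assume w: "\<forall>i. Suc i < length xs \<longrightarrow> {xs ! i, xs ! Suc i} \<in> E" and i: "Suc i < length (rev xs)"
  have "{xs ! (length xs - Suc (Suc i)), xs ! Suc (length xs - Suc (Suc i))} \<in> E"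
    using w i by simp
  moreover have "Suc (length xs - Suc (Suc i)) = length xs - Suc i" using i by simp
  ultimately show "{rev xs ! i, rev xs ! Suc i} \<in> E" using i
    by (simp add: rev_nth insert_commute)
qed

lemma pe_rev: "path_edges (rev xs) = path_edges xs"
proof -
  have *: "path_edges (rev xs) \<subseteq> path_edges xs" for xs :: "'b list"
  proof
    fix f assume "f \<in> path_edges (rev xs)"
    then obtain i where f: "f = {rev xs!i, rev xs!Suc i}" "Suc i < length xs"
      unfolding path_edges_def by auto
    let ?k = "length xs - Suc (Suc i)"
    have "Suc ?k = length xs - Suc i" using f by simp
    then have "f = {xs!?k, xs!Suc ?k}" using f by (simp add: rev_nth insert_commute)
    moreover have "Suc ?k < length xs" using f by simp
    ultimately show "f \<in> path_edges xs" unfolding path_edges_def by blast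
  qed
  show ?thesis using *[of xs] *[of "rev xs"] by simp
qed


lemma path_unique:
  "\<not> has_cycle E \<Longrightarrow> walk E ys \<Longrightarrow> walk E xs \<Longrightarrow> distinct ys \<Longrightarrow> distinct xs
   \<Longrightarrow> hd xs = hd ys \<Longrightarrow> last xs = last ys \<Longrightarrow> xs = ys"
proof (induction ys arbitrary: xs)
  case Nil then show ?case by simp
next
  case (Cons x ys')
  from Cons.prems obtain xs' where xs: "xs = x # xs'" by (cases xs) auto
  show ?case
  proof (cases "ys' = []")
    case True
    then have "last xs = x" using Cons.prems by simp
    then show ?thesis using xs True Cons.prems(5)
      by (metis distinct.simps(2) last_ConsL last_ConsR last_in_set)
  next
    case False
    then obtain y ys'' where ys': "ys' = y # ys''" by (cases ys') auto
    show ?thesis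
    proof (cases "xs' = []")
      case True
      then have "last ys' = x" using Cons.prems xs False by simp
      then show ?thesis using False Cons.prems(4) by (metis distinct.simps(2) last_in_set)
    next
      case False
      then obtain y' xs'' where xs': "xs' = y' # xs''" by (cases xs') auto
      have wys: "walk E ys'" "{x,y} \<in> E" using Cons.prems(2) ys' by auto
      have wxs: "walk E xs'" using Cons.prems(3) xs xs' by auto
      show ?thesis
      proof (cases "y = y'")
        case True
        have "xs' = ys'"
          apply (rule Cons.IH)
          using Cons.prems wys wxs xs xs' ys' True by auto
        then show ?thesis using xs by simp
      next
        case ne: False
        show ?thesis
        proof (cases "y \<in> set xs")
          case True
          then obtain k where k: "k < length xs" "xs ! k = y" by (metis in_set_conv_nth)
          have "y \<noteq> x" using Cons.prems(4) ys' by auto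
          then have "k \<noteq> 0" using k xs by (metis nth_Cons_0)
          moreover have "k \<noteq> 1" using k xs xs' ne by auto
          ultimately have "2 \<le> k" by simp
          moreover have "{xs!k, hd xs} \<in> E" using k xs wys by (simp add: insert_commute)
          ultimately have "has_cycle E" using cycle_lemma Cons.prems k by blast
          then show ?thesis using Cons.prems by simp
        next
          case False
          have "y # xs = ys'"
            apply (rule Cons.IH)
            using Cons.prems wys xs xs' ys' False by (auto simp: insert_commute)
          then have "x \<in> set ys'" using xs by auto
          then show ?thesis using Cons.prems(4) by simp
        qed
      qed
    qed
  qed
qed


lemma sp_rev: "simple_path T xs x y \<Longrightarrow> simple_path T (rev xs) y x"
  unfolding simple_path_def by (metis walk_rev distinct_rev hd_rev last_rev)

lemma sp_unique: "\<not> has_cycle T \<Longrightarrow> simple_path T Q x y \<Longrightarrow> simple_path T xs x y \<Longrightarrow> xs = Q"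
  unfolding simple_path_def using path_unique[of T Q xs] by metis

lemma tpe_eq:
  assumes "\<not> has_cycle T" "simple_path T Q x y"
  shows "tree_path_edges T x y = path_edges Q" "tree_path_edges T y x = path_edges Q"
proof -
  have "{path_edges xs | xs. simple_path T xs x y} = {path_edges Q}"
    using sp_unique[OF assms] assms(2) by blast
  then show "tree_path_edges T x y = path_edges Q"
    unfolding tree_path_edges_def by simp
  have "path_edges xs = path_edges Q" if "simple_path T xs y x" for xs
  proof -
    have "rev xs = Q" using sp_unique[OF assms sp_rev[OF that]] .
    then show ?thesis using pe_rev by metis
  qed
  then have "{path_edges xs | xs. simple_path T xs y x} = {path_edges Q}"
    using sp_rev[OF assms(2)] pe_rev[of Q] by auto
  then show "tree_path_edges T y x = path_edges Q"
    unfolding tree_path_edges_def by simp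
qed

lemma metric_tri: "metric_on V w \<Longrightarrow> x\<in>V \<Longrightarrow> y\<in>V \<Longrightarrow> z\<in>V \<Longrightarrow> w x z \<le> w x y + w y z"
  unfolding metric_on_def by simp
lemma metric_sym: "metric_on V w \<Longrightarrow> x\<in>V \<Longrightarrow> y\<in>V \<Longrightarrow> w x y = w y x"
  unfolding metric_on_def by simp
lemma metric_pos: "metric_on V w \<Longrightarrow> x\<in>V \<Longrightarrow> y\<in>V \<Longrightarrow> x \<noteq> y \<Longrightarrow> w x y > 0"
  unfolding metric_on_def by simp
lemma metric_zero: "metric_on V w \<Longrightarrow> x\<in>V \<Longrightarrow> w x x = 0"
  unfolding metric_on_def by simp

lemma pw_eq: assumes "metric_on V w" "x \<in> V" "y \<in> V" "x \<noteq> y" shows "pw w {x,y} = w x y"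
proof -
  have sym: "w y x = w x y" using metric_sym assms by metis
  show ?thesis unfolding pw_def
  proof (rule the_equality)
    show "\<exists>a b. {x, y} = {a, b} \<and> a \<noteq> b \<and> w x y = w a b" using assms by blast
  next
    fix d assume "\<exists>a b. {x, y} = {a, b} \<and> a \<noteq> b \<and> d = w a b"
    then obtain a b where "{x, y} = {a, b}" "d = w a b" by blast
    then show "d = w x y" using sym by (auto simp: doubleton_eq_iff)
  qed
qed

lemma pw_nonneg: assumes "metric_on V w" "f \<in> all_pairs V" shows "pw w f \<ge> 0"
proof -
  obtain x y where f: "f = {x,y}" "x \<in> V" "y \<in> V" "x \<noteq> y" using assms(2) unfolding all_pairs_def by blast
  then have "w x y > 0" using metric_pos assms(1) by metis
  then show ?thesis using pw_eq[OF assms(1) f(2-4)] f(1) by simp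
qed

lemma path_triangle:
  "metric_on V w \<Longrightarrow> walk E xs \<Longrightarrow> distinct xs \<Longrightarrow> E \<subseteq> all_pairs V \<Longrightarrow> set xs \<subseteq> V
   \<Longrightarrow> w (hd xs) (last xs) \<le> wset w (path_edges xs)"
proof (induction xs rule: induct_list012)
  case 1 then show ?case by simp
next
  case (2 x) then show ?case by (simp add: wset_def metric_zero)
next
  case (3 x y zs)
  have xyV: "x \<in> V" "y \<in> V" "last (y#zs) \<in> V" "x \<noteq> y" using "3.prems"(5,3) by auto
  have IH: "w y (last (y#zs)) \<le> wset w (path_edges (y#zs))"
    using "3.IH"(2) "3.prems" by (simp add: walk_CC)
  have "{x,y} \<notin> path_edges (y#zs)" using pe_sub "3.prems"(3) by fastforce
  then have "wset w (path_edges (x#y#zs)) = pw w {x,y} + wset w (path_edges (y#zs))"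
    by (simp add: wset_def finite_pe)
  moreover have "pw w {x,y} = w x y" using pw_eq[OF "3.prems"(1) xyV(1,2,4)] .
  moreover have "w x (last (y#zs)) \<le> w x y + w y (last (y#zs))"
    using metric_tri[OF "3.prems"(1) xyV(1,2,3)] .
  ultimately show ?case using IH by (simp del: pe_CC)
qed



lemma all_pairs_mem: "f \<in> all_pairs W \<Longrightarrow> a \<in> f \<Longrightarrow> \<exists>c. f = {a,c} \<and> c \<noteq> a \<and> c \<in> W \<and> a \<in> W"
  unfolding all_pairs_def by auto

lemma walk_Cons_hd: "xs \<noteq> [] \<Longrightarrow> walk E (c # xs) \<longleftrightarrow> {c, hd xs} \<in> E \<and> walk E xs"
  by (cases xs) auto

lemma extend:
  assumes nc: "\<not> has_cycle T" and ET: "E' \<subseteq> T" and EV: "E' \<subseteq> all_pairs V'"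
    and fin: "finite V'" and uV: "u \<in> V'"
    and wQ: "walk T Q" and dQ: "distinct Q" and hQ: "hd Q = u" and lQ: "2 \<le> length Q"
  shows "\<exists>P0. walk E' (P0 @ [u]) \<and> distinct (P0 @ Q) \<and> special V' E' (hd (P0 @ [u]))"
proof -
  define S where "S = (\<lambda>P0. walk E' (P0 @ [u]) \<and> distinct (P0 @ Q))"
  have Q: "Q = u # tl Q" using hQ lQ by (cases Q) auto
  have S0: "S []" unfolding S_def using dQ by simp
  have bound: "length P0 \<le> card V'" if "S P0" for P0
  proof -
    have "set (P0 @ [u]) \<subseteq> V'" using walk_set[of E' "P0 @ [u]" V'] that EV uV unfolding S_def by simp
    then have "set P0 \<subseteq> V'" by simp
    moreover have "distinct P0" using that unfolding S_def by simp
    ultimately show ?thesis using fin by (metis card_mono distinct_card)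
  qed
  have "\<exists>x. S x \<and> (\<forall>y. S y \<longrightarrow> length y \<le> length x)"
    by (rule ex_has_greatest_nat[of S "[]" length "Suc (card V')"]) (use S0 bound in fastforce)+
  then obtain P0 where SP: "S P0" and maxP: "\<And>P. S P \<Longrightarrow> length P \<le> length P0"
    by blast
  let ?a = "hd (P0 @ [u])"
  let ?R = "P0 @ Q"
  have wP: "walk E' (P0 @ [u])" and dR: "distinct ?R" using SP unfolding S_def by auto
  have aV: "?a \<in> V'" using walk_set[of E' "P0 @ [u]" V'] wP EV uV by (cases P0) auto
  have wR: "walk T ?R" using walk_app[of T P0 u "tl Q"] walk_mono[OF ET wP] wQ Q by simp
  have hR: "hd ?R = ?a" using hQ Q by (cases P0) auto
  have lR: "2 \<le> length ?R" using lQ by simp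
  have "degree E' ?a \<noteq> 2"
  proof
    assume "degree E' ?a = 2"
    then obtain f1 f2 where ff: "{f \<in> E'. ?a \<in> f} = {f1, f2}" "f1 \<noteq> f2"
      unfolding degree_def by (auto simp: card_2_iff)
    have f1: "f1 \<in> E'" "?a \<in> f1" and f2: "f2 \<in> E'" "?a \<in> f2" using ff(1) by blast+
    obtain c1 where c1: "f1 = {?a, c1}" "c1 \<noteq> ?a" "c1 \<in> V'" using all_pairs_mem[of f1 V' ?a] f1 EV by blast
    obtain c2 where c2: "f2 = {?a, c2}" "c2 \<noteq> ?a" "c2 \<in> V'" using all_pairs_mem[of f2 V' ?a] f2 EV by blast
    have "c1 \<noteq> c2" using c1 c2 ff(2) by auto
    then obtain c where c: "{?a, c} \<in> E'" "c \<noteq> ?a" "c \<noteq> ?R ! 1"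
      using c1 c2 f1 f2 by metis
    have cR: "c \<notin> set ?R"
    proof
      assume "c \<in> set ?R"
      then obtain j where j: "j < length ?R" "?R ! j = c" by (metis in_set_conv_nth)
      have "j \<noteq> 0" using j c hR lR by (metis hd_conv_nth list.size(3) not_numeral_le_zero)
      moreover have "j \<noteq> 1" using j c by auto
      ultimately have "2 \<le> j" by simp
      moreover have "{?R ! j, hd ?R} \<in> T" using j c hR ET by (auto simp: insert_commute)
      ultimately have "has_cycle T" using cycle_lemma[OF wR dR _ j(1)] by blast
      then show False using nc by simp
    qed
    have "S (c # P0)"
      unfolding S_def using cR dR wP c(1) walk_Cons_hd[of "P0 @ [u]" E' c]
      by (simp add: insert_commute)
    then have "length (c # P0) \<le> length P0" using maxP by blast
    then show False by simp
  qed
  then have "special V' E' ?a" unfolding special_def using aV by simp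
  then show ?thesis using wP dR by blast
qed


lemma walk_pe: "walk E xs \<Longrightarrow> path_edges xs \<subseteq> E"
  unfolding walk_def path_edges_def by auto

lemma pe_disj: "distinct (xs @ y # ys) \<Longrightarrow> path_edges (y # ys) \<inter> path_edges (xs @ [y]) = {}"
proof (rule ccontr)
  assume d: "distinct (xs @ y # ys)" and "path_edges (y # ys) \<inter> path_edges (xs @ [y]) \<noteq> {}"
  then obtain f where f1: "f \<in> path_edges (y # ys)" and f2: "f \<in> path_edges (xs @ [y])" by blast
  from f1 obtain i where i: "f = {(y#ys)!i, (y#ys)!Suc i}" "Suc i < length (y#ys)"
    unfolding path_edges_def by blast
  have "(y#ys)!Suc i \<in> set ys" using i(2) by simp
  moreover have "(y#ys)!Suc i \<in> set (xs @ [y])" using pe_sub[OF f2] i(1) by blast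
  ultimately show False using d by auto
qed

lemma finite_all_pairs: "finite V \<Longrightarrow> finite (all_pairs V)"
proof -
  assume "finite V"
  moreover have "all_pairs V \<subseteq> Pow V" unfolding all_pairs_def by auto
  ultimately show ?thesis by (meson finite_Pow_iff finite_subset)
qed

theorem mainTheorem2:
  fixes V :: "'a set" and w :: "'a \<Rightarrow> 'a \<Rightarrow> real" and T :: "'a set set"
    and V' :: "'a set" and E' :: "'a set set" and u v :: 'a
  assumes "finite V"
    and "metric_on V w"
    and "min_spanning_tree V w T"
    and "subtree V T V' E'"
    and "u \<in> V'" and "v \<in> V" and "v \<notin> V'"
  shows "adv T w {{u, v}} E' \<le> adv_star V T w V' E'"
proof -
  note met = assms(2)
  have tT: "is_tree V T" using assms(3) unfolding min_spanning_tree_def spanning_tree_def by simp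
  have nc: "\<not> has_cycle T" and TV: "T \<subseteq> all_pairs V" using tT unfolding is_tree_def by auto
  have V'V: "V' \<subseteq> V" and ET: "E' \<subseteq> T" and tE: "is_tree V' E'" using assms(4) unfolding subtree_def by auto
  have EV: "E' \<subseteq> all_pairs V'" and finV': "finite V'" using tE unfolding is_tree_def by auto
  have uV: "u \<in> V" using assms(5) V'V by blast
  have uv: "u \<noteq> v" using assms(5,7) by blast
  obtain Q where Q: "simple_path T Q u v" using tT uV assms(6) unfolding is_tree_def by blast
  have wQ: "walk T Q" and dQ: "distinct Q" and hQ: "hd Q = u" and lQ: "last Q = v"
    using Q unfolding simple_path_def by auto
  have lenQ: "2 \<le> length Q"
  proof (rule ccontr)
    assume "\<not> 2 \<le> length Q"
    moreover have "Q \<noteq> []" using wQ by auto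
    moreover have "length Q \<noteq> 0" using \<open>Q \<noteq> []\<close> by simp
    ultimately have "length Q = 1" by linarith
    then have "hd Q = last Q" using \<open>Q \<noteq> []\<close> by (simp add: hd_conv_nth last_conv_nth)
    then show False using hQ lQ uv by simp
  qed
  have Qc: "Q = u # tl Q" using hQ lenQ by (cases Q) auto
  obtain P0 where wP: "walk E' (P0 @ [u])" and dR: "distinct (P0 @ Q)"
    and sp: "special V' E' (hd (P0 @ [u]))"
    using extend[OF nc ET EV finV' assms(5) wQ dQ hQ lenQ] by blast
  define a where "a = hd (P0 @ [u])"
  define P where "P = P0 @ [u]"
  define R where "R = P0 @ Q"
  have aV': "a \<in> V'" using sp unfolding special_def a_def by simp
  have aV: "a \<in> V" using aV' V'V by blast
  have av: "a \<noteq> v" using aV' assms(7) by blast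
  have wR: "walk T R" unfolding R_def using walk_app[of T P0 u "tl Q"] walk_mono[OF ET wP] wQ Qc by simp
  have hR: "hd R = a" unfolding R_def a_def using hQ Qc by (cases P0) auto
  have lR: "last R = v" unfolding R_def using lQ Qc by (metis append_is_Nil_conv last_appendR list.distinct(1))
  have spR: "simple_path T R a v" unfolding simple_path_def using wR dR hR lR R_def by simp
  have dR': "distinct (P0 @ u # tl Q)" using dR Qc by metis
  define C1 where "C1 = cov T {{u,v}} \<inter> E'"
  define C2 where "C2 = cov T {{a,v}} \<inter> E'"
  define PP where "PP = path_edges P"
  have C1Q: "C1 \<subseteq> path_edges Q"
  proof
    fix f assume "f \<in> C1"
    then obtain u' v' where uv': "{u',v'} = {u,v}" "f \<in> tree_path_edges T u' v'"
      unfolding C1_def cov_def by blast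
    then show "f \<in> path_edges Q" using tpe_eq[OF nc Q] by (auto simp: doubleton_eq_iff)
  qed
  have QR: "path_edges Q \<subseteq> path_edges R" unfolding R_def using pe_app2[of u "tl Q" P0] Qc by simp
  have PR: "PP \<subseteq> path_edges R" unfolding R_def PP_def P_def using pe_app1[of P0 u "tl Q"] Qc by simp
  have RT: "path_edges R = tree_path_edges T a v" using tpe_eq(1)[OF nc spR] by simp
  have PPE: "PP \<subseteq> E'" unfolding PP_def P_def using walk_pe[OF wP] .
  have sub: "C1 \<union> PP \<subseteq> C2"
  proof
    fix f assume f: "f \<in> C1 \<union> PP"
    then have "f \<in> E'" using PPE unfolding C1_def by blast
    moreover have "f \<in> tree_path_edges T a v" using f C1Q QR PR RT by blast
    ultimately show "f \<in> C2" unfolding C2_def cov_def using ET by blast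
  qed
  have "path_edges Q \<inter> PP = {}" using pe_disj[OF dR'] Qc unfolding PP_def P_def by metis
  then have disj: "C1 \<inter> PP = {}" using C1Q by blast
  have finT: "finite T" using finite_all_pairs[OF assms(1)] TV finite_subset by blast
  have finC2: "finite C2" unfolding C2_def cov_def using finT by simp
  have nonneg: "\<forall>f\<in>C2. pw w f \<ge> 0" unfolding C2_def cov_def using TV pw_nonneg[OF met] by blast
  have "wset w C1 + wset w PP = wset w (C1 \<union> PP)"
  proof -
    have "finite C1" "finite PP" using finite_subset[OF sub finC2] by auto
    then show ?thesis unfolding wset_def using sum.union_disjoint[OF _ _ disj, of "pw w"] by simp
  qed
  also have "\<dots> \<le> wset w C2"
    unfolding wset_def using sum_mono2[OF finC2 sub] nonneg by blast
  finally have ineq1: "wset w C1 + wset w PP \<le> wset w C2" .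
  have setP: "set P \<subseteq> V"
    using walk_set[of E' P V'] wP EV assms(5) V'V unfolding P_def by auto
  have "w a u \<le> wset w PP"
  proof -
    have "distinct P" using dR' unfolding P_def by simp
    then show ?thesis
      using path_triangle[OF met walk_mono[OF ET wP] _ TV] setP unfolding PP_def P_def a_def
      by simp
  qed
  moreover have "w a v \<le> w a u + w u v" using metric_tri[OF met aV uV assms(6)] .
  moreover have "wset w {{u,v}} = w u v" unfolding wset_def using pw_eq[OF met uV assms(6) uv] by simp
  moreover have "wset w {{a,v}} = w a v" unfolding wset_def using pw_eq[OF met aV assms(6) av] by simp
  ultimately have step1: "adv T w {{u, v}} E' \<le> adv T w {{a, v}} E'"
    unfolding adv_def using ineq1 unfolding C1_def C2_def by linarith
  define M where "M = {adv T w F E' | F. F \<subseteq> all_pairs V \<and> (\<forall>e\<in>F. \<exists>x\<in>e. special V' E' x)}"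
  have "M \<subseteq> (\<lambda>F. adv T w F E') ` Pow (all_pairs V)" unfolding M_def by blast
  then have finM: "finite M" using finite_all_pairs[OF assms(1)] by (meson finite_Pow_iff finite_imageI finite_subset)
  have "{a,v} \<in> all_pairs V" unfolding all_pairs_def using aV assms(6) av by blast
  moreover have "special V' E' a" using sp a_def by simp
  ultimately have "adv T w {{a, v}} E' \<in> M" unfolding M_def by blast
  then have "adv T w {{a, v}} E' \<le> Max M" using finM by simp
  then show ?thesis using step1 unfolding adv_star_def M_def by simp
qed

end
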